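(* Let $\mathcal{H}$ be a complex Hilbert space. The inclusion map $\mathcal{P}(\mathcal{H})\hookrightarrow\mathcal{P}_{\mathbb{R}}(\mathcal{H})$, $P\mapsto P$, is an injective, completely additive homomorphism of involution lattices which is covariant with respect to the actions $P\mapsto UPU^*$ of the group $\mathrm{AU}(\mathcal{H})$ of all unitary and antiunitary operators on $\mathcal{H}$.
   Context: $\mathcal{P}(\mathcal{H})$ is the lattice of (complex linear) orthogonal projections with operator order, orthocomplement $P^\perp=1-P$, minimal/maximal elements $0,1$. $\mathcal{P}_{\mathbb{R}}(\mathcal{H})$ is the set of real orthogonal projections on $\mathcal{H}$ (real linear, selfadjoint with respect to $\mathrm{Re}\langle\cdot,\cdot\rangle$, idempotent), i.e. projections onto closed real linear subspaces; it is ordered by $E\le F\iff E\mathcal{H}\subset F\mathcal{H}$, has $0,1$, join = projection onto the closed real span, meet = projection onto the intersection, and involution $E'=1+iEi$ (the projection onto the symplectic complement $\{\xi:\mathrm{Im}\langle\xi,h\rangle=0\ \forall h\in E\mathcal{H}\}$). An involution lattice is a $\sigma$-complete bounded lattice with an order-reversing involution (not necessarily a complement); a homomorphism of involution lattices preserves $0$, $1$, the involution, and binary joins and meets. A map is completely additive if it maps the join of any (arbitrary) family of pairwise separated elements ($A\le B^{\text{involution}}$ for distinct $A,B$) to the join of the images. *)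

theory Defs
  imports "HOL-Analysis.Analysis"
begin

text \<open>A complex Hilbert space is modelled as a real Hilbert space
  (type class real_inner + complete_space, inner = Re of the complex inner product)
  together with an orthogonal complex structure J (multiplication by i).\<close>

definition complex_structure :: "('a::real_inner \<Rightarrow> 'a) \<Rightarrow> bool" where
  "complex_structure J \<longleftrightarrow> linear J \<and> (\<forall>x. J (J x) = - x) \<and>
     (\<forall>x y. inner (J x) (J y) = inner x y)"

text \<open>Complex scalar multiplication and complex inner product (linear in the first argument).\<close>
definition cscale :: "('a::real_vector \<Rightarrow> 'a) \<Rightarrow> complex \<Rightarrow> 'a \<Rightarrow> 'a" where
  "cscale J c x = Re c *\<^sub>R x + Im c *\<^sub>R J x"

definition cinner :: "('a::real_inner \<Rightarrow> 'a) \<Rightarrow> 'a \<Rightarrow> 'a \<Rightarrow> complex" where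
  "cinner J x y = Complex (inner x y) (inner x (J y))"

definition cspan :: "('a::real_vector \<Rightarrow> 'a) \<Rightarrow> 'a set \<Rightarrow> 'a set" where
  "cspan J S = span (S \<union> J ` S)"

definition is_cproj :: "('a::real_inner \<Rightarrow> 'a) \<Rightarrow> ('a \<Rightarrow> 'a) \<Rightarrow> bool" where
  "is_cproj J P \<longleftrightarrow> linear P \<and> (\<forall>c x. P (cscale J c x) = cscale J c (P x)) \<and>
     (\<forall>x y. cinner J (P x) y = cinner J x (P y)) \<and> (\<forall>x. P (P x) = P x)"

definition is_rproj :: "('a::real_inner \<Rightarrow> 'a) \<Rightarrow> bool" where
  "is_rproj E \<longleftrightarrow> linear E \<and> (\<forall>x y. inner (E x) y = inner x (E y)) \<and> (\<forall>x. E (E x) = E x)"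

text \<open>Operator order on P(H): <Px,x> <= <Qx,x> (these are real for selfadjoint operators).\<close>
definition cle :: "('a::real_inner \<Rightarrow> 'a) \<Rightarrow> ('a \<Rightarrow> 'a) \<Rightarrow> ('a \<Rightarrow> 'a) \<Rightarrow> bool" where
  "cle J P Q \<longleftrightarrow> (\<forall>x. Re (cinner J (P x) x) \<le> Re (cinner J (Q x) x))"

definition cperp :: "('a::real_vector \<Rightarrow> 'a) \<Rightarrow> 'a \<Rightarrow> 'a" where
  "cperp P = (\<lambda>x. x - P x)"

definition rinv :: "('a::real_vector \<Rightarrow> 'a) \<Rightarrow> ('a \<Rightarrow> 'a) \<Rightarrow> 'a \<Rightarrow> 'a" where
  "rinv J E = (\<lambda>x. x + J (E (J x)))"

definition cproj_onto :: "('a::real_inner \<Rightarrow> 'a) \<Rightarrow> 'a set \<Rightarrow> 'a \<Rightarrow> 'a" where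
  "cproj_onto J S = (THE P. is_cproj J P \<and> range P = S)"

definition rproj_onto :: "'a::real_inner set \<Rightarrow> 'a \<Rightarrow> 'a" where
  "rproj_onto S = (THE E. is_rproj E \<and> range E = S)"

definition cSup :: "('a::real_inner \<Rightarrow> 'a) \<Rightarrow> ('a \<Rightarrow> 'a) set \<Rightarrow> 'a \<Rightarrow> 'a" where
  "cSup J \<P> = cproj_onto J (closure (cspan J (\<Union>P\<in>\<P>. range P)))"

definition rSup :: "('a::real_inner \<Rightarrow> 'a) set \<Rightarrow> 'a \<Rightarrow> 'a" where
  "rSup \<E> = rproj_onto (closure (span (\<Union>E\<in>\<E>. range E)))"

definition cjoin :: "('a::real_inner \<Rightarrow> 'a) \<Rightarrow> ('a \<Rightarrow> 'a) \<Rightarrow> ('a \<Rightarrow> 'a) \<Rightarrow> 'a \<Rightarrow> 'a" where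
  "cjoin J P Q = cSup J {P, Q}"

definition rjoin :: "('a::real_inner \<Rightarrow> 'a) \<Rightarrow> ('a \<Rightarrow> 'a) \<Rightarrow> 'a \<Rightarrow> 'a" where
  "rjoin E F = rSup {E, F}"

definition cmeet :: "('a::real_inner \<Rightarrow> 'a) \<Rightarrow> ('a \<Rightarrow> 'a) \<Rightarrow> ('a \<Rightarrow> 'a) \<Rightarrow> 'a \<Rightarrow> 'a" where
  "cmeet J P Q = cproj_onto J (range P \<inter> range Q)"

definition rmeet :: "('a::real_inner \<Rightarrow> 'a) \<Rightarrow> ('a \<Rightarrow> 'a) \<Rightarrow> 'a \<Rightarrow> 'a" where
  "rmeet E F = rproj_onto (range E \<inter> range F)"

definition unitary :: "('a::real_inner \<Rightarrow> 'a) \<Rightarrow> ('a \<Rightarrow> 'a) \<Rightarrow> bool" where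
  "unitary J U \<longleftrightarrow> surj U \<and> linear U \<and> (\<forall>c x. U (cscale J c x) = cscale J c (U x)) \<and>
     (\<forall>x y. cinner J (U x) (U y) = cinner J x y)"

definition antiunitary :: "('a::real_inner \<Rightarrow> 'a) \<Rightarrow> ('a \<Rightarrow> 'a) \<Rightarrow> bool" where
  "antiunitary J U \<longleftrightarrow> surj U \<and> linear U \<and> (\<forall>c x. U (cscale J c x) = cscale J (cnj c) (U x)) \<and>
     (\<forall>x y. cinner J (U x) (U y) = cnj (cinner J x y))"

definition AU :: "('a::real_inner \<Rightarrow> 'a) \<Rightarrow> ('a \<Rightarrow> 'a) set" where
  "AU J = {U. unitary J U \<or> antiunitary J U}"

text \<open>The action P \<mapsto> U P U^* (U^* = U^{-1} for (anti)unitary U) on P(H) and on P_R(H).\<close>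
definition cact :: "('a \<Rightarrow> 'a) \<Rightarrow> ('a \<Rightarrow> 'a) \<Rightarrow> 'a \<Rightarrow> 'a" where
  "cact U P = U \<circ> P \<circ> inv U"

definition ract :: "('a \<Rightarrow> 'a) \<Rightarrow> ('a \<Rightarrow> 'a) \<Rightarrow> 'a \<Rightarrow> 'a" where
  "ract U E = U \<circ> E \<circ> inv U"

definition incl :: "('a \<Rightarrow> 'a) \<Rightarrow> 'a \<Rightarrow> 'a" where
  "incl P = P"

end

theory Submission
  imports Defs
begin

lemma cs_basic:
  assumes "complex_structure J"
  shows "linear J" "J (J x) = - x" "inner (J x) (J y) = inner x y"
  using assms unfolding complex_structure_def by auto

lemma cs_inner_left:
  assumes "complex_structure J"
  shows "inner (J a) b = - inner a (J b)"
proof -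
  have "inner (J a) b = inner (J (J a)) (J b)" using cs_basic(3)[OF assms] by simp
  also have "\<dots> = - inner a (J b)" using cs_basic(2)[OF assms] by simp
  finally show ?thesis .
qed

lemma cs_norm:
  assumes "complex_structure J"
  shows "norm (J x) = norm x"
  using cs_basic(3)[OF assms, of x x] by (simp add: norm_eq_sqrt_inner)

lemma cs_bl:
  assumes "complex_structure J"
  shows "bounded_linear J"
  apply (rule bounded_linear_intro[where K=1])
  using cs_basic(1)[OF assms] cs_norm[OF assms] by (auto simp: linear_add linear_scale)

lemma cscale_i: "cscale J \<i> x = J x"
  by (simp add: cscale_def)

lemma cproj_J:
  assumes "is_cproj J P"
  shows "P (J x) = J (P x)"
  using assms unfolding is_cproj_def by (metis cscale_i)

lemma cproj_rproj:
  assumes "is_cproj J P"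
  shows "is_rproj P"
proof -
  have "\<And>x y. inner (P x) y = inner x (P y)"
  proof -
    fix x y
    have "cinner J (P x) y = cinner J x (P y)" using assms unfolding is_cproj_def by blast
    then show "inner (P x) y = inner x (P y)" unfolding cinner_def by simp
  qed
  then show ?thesis using assms unfolding is_cproj_def is_rproj_def by blast
qed

lemma rproj_cproj:
  assumes cs: "complex_structure J" and E: "is_rproj E" and inv: "J ` range E \<subseteq> range E"
  shows "is_cproj J E"
proof -
  have lin: "linear E" and sa: "\<And>x y. inner (E x) y = inner x (E y)" and idem: "\<And>x. E (E x) = E x"
    using E unfolding is_rproj_def by auto
  have linJ: "linear J" using cs_basic(1)[OF cs] .
  have fix_: "\<And>y. y \<in> range E \<Longrightarrow> E y = y" using idem by auto
  have comm: "E (J x) = J (E x)" for x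
  proof -
    have a: "E (J (E x)) = J (E x)" using inv fix_ by blast
    define w where "w = J (x - E x)"
    have "inner (E w) (E w) = inner w (E (E w))" using sa by simp
    also have "\<dots> = inner w (E w)" using idem by simp
    also have "\<dots> = - inner (x - E x) (J (E w))" unfolding w_def by (rule cs_inner_left[OF cs])
    also have "\<dots> = 0"
    proof -
      obtain v where v: "J (E w) = E v" using inv by blast
      have "inner (x - E x) (E v) = inner x (E v) - inner (E x) (E v)" by (simp add: inner_diff_left)
      also have "\<dots> = inner (E x) v - inner (E (E x)) v" using sa by simp
      also have "\<dots> = 0" using idem by simp
      finally show ?thesis using v by simp
    qed
    finally have "E w = 0" by simp
    have "J (x - E x) = J x - J (E x)" by (rule linear_diff[OF linJ])
    then have "J x = J (E x) + w" unfolding w_def by simp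
    then have "E (J x) = E (J (E x) + w)" by (rule arg_cong)
    also have "\<dots> = E (J (E x)) + E w" by (rule linear_add[OF lin])
    finally show ?thesis using a \<open>E w = 0\<close> by simp
  qed
  have "\<forall>c x. E (cscale J c x) = cscale J c (E x)"
    unfolding cscale_def using lin comm by (simp add: linear_add linear_scale)
  moreover have "\<forall>x y. cinner J (E x) y = cinner J x (E y)"
  proof (intro allI)
    fix x y
    have "inner (E x) (J y) = inner x (E (J y))" by (rule sa)
    then show "cinner J (E x) y = cinner J x (E y)" unfolding cinner_def using sa[of x y] comm[of y] by simp
  qed
  ultimately show ?thesis using lin idem unfolding is_cproj_def by blast
qed

lemma onto_eq:
  assumes cs: "complex_structure J" and inv: "J ` M \<subseteq> M"
  shows "cproj_onto J M = rproj_onto M"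
proof -
  have "(\<lambda>E. is_cproj J E \<and> range E = M) = (\<lambda>E. is_rproj E \<and> range E = M)"
  proof (rule ext, rule iffI)
    fix E assume "is_cproj J E \<and> range E = M"
    then show "is_rproj E \<and> range E = M" using cproj_rproj by blast
  next
    fix E assume h: "is_rproj E \<and> range E = M"
    then have "is_cproj J E" using rproj_cproj[OF cs, of E] inv by simp
    then show "is_cproj J E \<and> range E = M" using h by simp
  qed
  then show ?thesis unfolding cproj_onto_def rproj_onto_def by simp
qed

lemma closure_span_inv:
  assumes cs: "complex_structure J" and S: "J ` S \<subseteq> S"
  shows "J ` closure (span S) \<subseteq> closure (span S)"
proof (rule image_closure_subset)
  show "continuous_on (closure (span S)) J"
    using cs_bl[OF cs] linear_continuous_on by blast
  show "closed (closure (span S))" by simp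
  have "J ` span S = span (J ` S)" using span_linear_image[OF cs_basic(1)[OF cs]] by simp
  also have "\<dots> \<subseteq> span S" using S by (simp add: span_mono)
  finally show "J ` span S \<subseteq> closure (span S)" using closure_subset by blast
qed

lemma sup_eq:
  assumes cs: "complex_structure J" and all: "\<forall>P\<in>\<P>. is_cproj J P"
  shows "cSup J \<P> = rSup \<P>"
proof -
  let ?S = "\<Union>P\<in>\<P>. range P"
  have S: "J ` ?S \<subseteq> ?S"
  proof
    fix y assume "y \<in> J ` ?S"
    then obtain P x where "P \<in> \<P>" "y = J (P x)" by blast
    then show "y \<in> ?S" using all cproj_J by (metis UN_I rangeI)
  qed
  then have "cspan J ?S = span ?S" unfolding cspan_def by (simp add: Un_absorb2)
  then show ?thesis unfolding cSup_def rSup_def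
    using onto_eq[OF cs closure_span_inv[OF cs S]] by simp
qed


lemma act_cproj:
  assumes su: "surj U" and lin: "linear U"
    and sc: "\<And>c x. U (cscale J c x) = cscale J (\<sigma> c) (U x)"
    and ci: "\<And>x y. cinner J (U x) (U y) = \<sigma> (cinner J x y)"
    and ss: "\<And>c. \<sigma> (\<sigma> c) = c" and sre: "\<And>c. Re (\<sigma> c) = Re c"
    and P: "is_cproj J P"
  shows "is_cproj J (U \<circ> P \<circ> inv U)"
proof -
  have ri: "inner (U x) (U y) = inner x y" for x y
  proof -
    have "Re (cinner J (U x) (U y)) = Re (cinner J x y)" using ci sre by simp
    then show ?thesis unfolding cinner_def by simp
  qed
  have "inj U"
  proof (rule injI)
    fix x y assume "U x = U y"
    then have "U (x - y) = 0" using lin by (simp add: linear_diff)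
    then have "inner (x - y) (x - y) = 0" using ri[of "x-y" "x-y"] by simp
    then show "x = y" by simp
  qed
  define V where "V = inv U"
  have UV: "U (V y) = y" for y unfolding V_def using su by (simp add: surj_f_inv_f)
  have VU: "V (U x) = x" for x unfolding V_def using \<open>inj U\<close> by simp
  have linV: "linear V"
  proof (rule linearI)
    fix a b show "V (a + b) = V a + V b"
      by (metis UV VU lin linear_add)
  next
    fix r :: real and a show "V (r *\<^sub>R a) = r *\<^sub>R V a"
      by (metis UV VU lin linear_scale)
  qed
  have scV: "V (cscale J c y) = cscale J (\<sigma> c) (V y)" for c y
    by (metis UV VU sc ss)
  have linP: "linear P" and scP: "\<And>c x. P (cscale J c x) = cscale J c (P x)"
    and saP: "\<And>x y. cinner J (P x) y = cinner J x (P y)" and idP: "\<And>x. P (P x) = P x"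
    using P unfolding is_cproj_def by auto
  have "linear (U \<circ> P \<circ> V)" using lin linP linV by (simp add: linear_compose)
  moreover have "\<forall>c x. (U \<circ> P \<circ> V) (cscale J c x) = cscale J c ((U \<circ> P \<circ> V) x)"
    by (simp add: scV scP sc ss)
  moreover have "\<forall>x y. cinner J ((U \<circ> P \<circ> V) x) y = cinner J x ((U \<circ> P \<circ> V) y)"
  proof (intro allI)
    fix x y
    have "cinner J ((U \<circ> P \<circ> V) x) y = cinner J (U (P (V x))) (U (V y))" by (simp add: UV)
    also have "\<dots> = \<sigma> (cinner J (P (V x)) (V y))" by (rule ci)
    also have "\<dots> = \<sigma> (cinner J (V x) (P (V y)))" by (simp add: saP)
    also have "\<dots> = cinner J (U (V x)) (U (P (V y)))" by (simp add: ci)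
    also have "\<dots> = cinner J x ((U \<circ> P \<circ> V) y)" by (simp add: UV)
    finally show "cinner J ((U \<circ> P \<circ> V) x) y = cinner J x ((U \<circ> P \<circ> V) y)" .
  qed
  moreover have "\<forall>x. (U \<circ> P \<circ> V) ((U \<circ> P \<circ> V) x) = (U \<circ> P \<circ> V) x"
    by (simp add: VU idP)
  ultimately show ?thesis unfolding is_cproj_def V_def by blast
qed

theorem lemma2p10:
  fixes J :: "'a::{real_inner, complete_space} \<Rightarrow> 'a"
  assumes "complex_structure J"
  shows "(\<forall>P. is_cproj J P \<longrightarrow> is_rproj (incl P))
    \<and> inj_on incl {P. is_cproj J P}
    \<and> incl (\<lambda>x::'a. 0) = (\<lambda>x. 0) \<and> incl (id::'a \<Rightarrow> 'a) = id
    \<and> (\<forall>P. is_cproj J P \<longrightarrow> incl (cperp P) = rinv J (incl P))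
    \<and> (\<forall>P Q. is_cproj J P \<and> is_cproj J Q \<longrightarrow>
          incl (cjoin J P Q) = rjoin (incl P) (incl Q)
        \<and> incl (cmeet J P Q) = rmeet (incl P) (incl Q))
    \<and> (\<forall>\<P>. (\<forall>P\<in>\<P>. is_cproj J P) \<and> (\<forall>P\<in>\<P>. \<forall>Q\<in>\<P>. P \<noteq> Q \<longrightarrow> cle J P (cperp Q)) \<longrightarrow>
          incl (cSup J \<P>) = rSup (incl ` \<P>))
    \<and> (\<forall>U\<in>AU J. \<forall>P. is_cproj J P \<longrightarrow>
          is_cproj J (cact U P) \<and> incl (cact U P) = ract U (incl P))"
proof -
  note cs = assms
  have inclid: "incl = id" by (rule ext) (simp add: incl_def)
  have A: "\<forall>P. is_cproj J P \<longrightarrow> incl (cperp P) = rinv J (incl P)"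
  proof (intro allI impI ext)
    fix P x assume P: "is_cproj J P"
    show "incl (cperp P) x = rinv J (incl P) x"
      unfolding incl_def cperp_def rinv_def using cproj_J[OF P] cs_basic(2)[OF cs] by simp
  qed
  have B: "\<forall>P Q. is_cproj J P \<and> is_cproj J Q \<longrightarrow>
          incl (cjoin J P Q) = rjoin (incl P) (incl Q)
        \<and> incl (cmeet J P Q) = rmeet (incl P) (incl Q)"
  proof (intro allI impI conjI)
    fix P Q assume PQ: "is_cproj J P \<and> is_cproj J Q"
    show "incl (cjoin J P Q) = rjoin (incl P) (incl Q)"
      unfolding incl_def cjoin_def rjoin_def using sup_eq[OF cs, of "{P,Q}"] PQ by simp
    have "J ` (range P \<inter> range Q) \<subseteq> range P \<inter> range Q"
    proof (rule image_subsetI)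
      fix y assume y: "y \<in> range P \<inter> range Q"
      then obtain a b where a: "y = P a" and b: "y = Q b" by blast
      have "J y = P (J a)" using a cproj_J[of J P a] PQ by simp
      moreover have "J y = Q (J b)" using b cproj_J[of J Q b] PQ by simp
      ultimately show "J y \<in> range P \<inter> range Q" by (metis IntI rangeI)
    qed
    then show "incl (cmeet J P Q) = rmeet (incl P) (incl Q)"
      unfolding incl_def cmeet_def rmeet_def using onto_eq[OF cs] by simp
  qed
  have C: "\<forall>\<P>. (\<forall>P\<in>\<P>. is_cproj J P) \<and> (\<forall>P\<in>\<P>. \<forall>Q\<in>\<P>. P \<noteq> Q \<longrightarrow> cle J P (cperp Q)) \<longrightarrow>
          incl (cSup J \<P>) = rSup (incl ` \<P>)"
    using sup_eq[OF cs] by (simp add: inclid)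
  have D: "\<forall>U\<in>AU J. \<forall>P. is_cproj J P \<longrightarrow>
          is_cproj J (cact U P) \<and> incl (cact U P) = ract U (incl P)"
  proof (intro ballI allI impI conjI)
    fix U P assume U: "U \<in> AU J" and P: "is_cproj J P"
    show "incl (cact U P) = ract U (incl P)" by (simp add: incl_def cact_def ract_def)
    show "is_cproj J (cact U P)"
      using U unfolding AU_def cact_def
    proof (elim CollectE disjE)
      assume "unitary J U"
      then have "surj U" "linear U" "\<And>c x. U (cscale J c x) = cscale J c (U x)"
        "\<And>x y. cinner J (U x) (U y) = cinner J x y" unfolding unitary_def by auto
      then show "is_cproj J (U \<circ> P \<circ> inv U)"
        by (intro act_cproj[where \<sigma>="\<lambda>c. c"] P) auto
    next
      assume "antiunitary J U"
      then have "surj U" "linear U" "\<And>c x. U (cscale J c x) = cscale J (cnj c) (U x)"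
        "\<And>x y. cinner J (U x) (U y) = cnj (cinner J x y)" unfolding antiunitary_def by auto
      then show "is_cproj J (U \<circ> P \<circ> inv U)"
        by (intro act_cproj[where \<sigma>=cnj] P) auto
    qed
  qed
  have E: "\<forall>P. is_cproj J P \<longrightarrow> is_rproj (incl P)" using cproj_rproj unfolding incl_def by blast
  have F: "inj_on incl {P. is_cproj J P}" by (simp add: inclid)
  have G1: "incl (\<lambda>x::'a. 0) = (\<lambda>x. 0)" by (simp add: incl_def)
  have G2: "incl (id::'a \<Rightarrow> 'a) = id" by (simp add: incl_def)
  from E F G1 G2 A B C D show ?thesis by (intro conjI)
qed

end
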